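(* Let $(\mathcal{X},d_\mathcal{X})$, $(\mathcal{Y}_k,d_{\mathcal{Y}_k})$, $k=1,\dots,K$, be compact metric spaces, $c_k:\mathcal{X}\times\mathcal{Y}_k\to\mathbb{R}_+$ continuous, and assume that for every $Y=(y_1,\dots,y_K)\in\mathcal{Y}:=\mathcal{Y}_1\times\cdots\times\mathcal{Y}_K$ the problem $\min_{x\in\mathcal{X}}C(x,Y)$, with $C(x,Y):=\sum_{k=1}^K c_k(x,y_k)$, has a unique minimiser $B(Y)$. Assume moreover that there exist $x\in\mathcal{X}$ and $Y\in\mathcal{Y}$ with $x\neq B(Y)$, and let $R:=\max_{(x,Y)\in\mathcal{X}\times\mathcal{Y}} d_\mathcal{X}(x,B(Y))$. Then there exists a function $\delta=\eta\circ d_\mathcal{X}$, where $\eta:[0,R]\to\mathbb{R}_+$ is lower semi-continuous, non-decreasing and satisfies $\eta(s)=0\iff s=0$, such that $$\forall (x,Y)\in\mathcal{X}\times\mathcal{Y},\quad C(x,Y)\ge C(B(Y),Y)+\delta(x,B(Y)).$$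
   Context: $\mathcal{Y}$ is equipped with the product distance; $B$ is continuous so $R$ is finite and positive under the stated assumptions. *)

theory Defs
  imports "HOL-Analysis.Analysis"
begin

definition lsc_on :: "real set \<Rightarrow> (real \<Rightarrow> real) \<Rightarrow> bool" where
  "lsc_on S f \<longleftrightarrow>
     (\<forall>x\<in>S. \<forall>t. t < f x \<longrightarrow> (\<exists>e>0. \<forall>y\<in>S. dist y x < e \<longrightarrow> t < f y))"

end

theory Submission imports Defs begin

lemma compact_PiE_lessThan:
  fixes Ys :: "nat \<Rightarrow> 'b::topological_space set"
  assumes "\<And>k. k < K \<Longrightarrow> compact (Ys k)"
  shows "compact (PiE {..<K} Ys)"
proof -
  define S' where "S' i = (if i < K then Ys i else {undefined})" for i
  have eq: "PiE {..<K} Ys = PiE UNIV S'"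
    apply (auto simp: PiE_iff S'_def extensional_def)
    subgoal for f i by (drule spec[of _ i]) simp
    subgoal for f i by (drule spec[of _ i]) (simp split: if_splits)
    done
  have "compactin (product_topology (\<lambda>_. euclidean) UNIV) (PiE UNIV S')"
    unfolding compactin_PiE using assms by (auto simp: S'_def)
  then show ?thesis unfolding eq euclidean_product_topology by simp
qed

lemma contC:
  fixes X :: "'a::topological_space set" and Ys :: "nat \<Rightarrow> 'b::topological_space set" and c :: "nat \<Rightarrow> 'a \<Rightarrow> 'b \<Rightarrow> real"
  assumes cont: "\<And>k. k < K \<Longrightarrow> continuous_on (X \<times> Ys k) (\<lambda>(x, y). c k x y)"
  shows "continuous_on (X \<times> PiE {..<K} Ys) (\<lambda>p. (\<Sum>k<K. c k (fst p) (snd p k)))"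
proof (rule continuous_on_sum[where f="\<lambda>k p. c k (fst p) (snd p k)"])
  fix k assume k: "k \<in> {..<K}"
  have inner: "continuous_on (X \<times> PiE {..<K} Ys) (\<lambda>p::'a \<times> (nat \<Rightarrow> 'b). (fst p, snd p k))"
  proof (rule continuous_on_Pair)
    show "continuous_on (X \<times> PiE {..<K} Ys) (\<lambda>p::'a \<times> (nat \<Rightarrow> 'b). fst p)"
      by (rule continuous_on_fst[OF continuous_on_id])
    have "continuous_on (X \<times> PiE {..<K} Ys) (\<lambda>p::'a \<times> (nat \<Rightarrow> 'b). snd p)"
      by (rule continuous_on_snd[OF continuous_on_id])
    then show "continuous_on (X \<times> PiE {..<K} Ys) (\<lambda>p::'a \<times> (nat \<Rightarrow> 'b). snd p k)"
      by (rule continuous_on_product_then_coordinatewise)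
  qed
  have img: "(\<lambda>p::'a \<times> (nat \<Rightarrow> 'b). (fst p, snd p k)) ` (X \<times> PiE {..<K} Ys) \<subseteq> X \<times> Ys k"
    using k by (auto simp: PiE_iff)
  from continuous_on_compose2[OF cont[of k] inner img] k
  show "continuous_on (X \<times> PiE {..<K} Ys) (\<lambda>p. c k (fst p) (snd p k))"
    by (simp add: case_prod_unfold)
qed


lemma key_gap:
  fixes X :: "'a::metric_space set"
    and Ys :: "nat \<Rightarrow> 'b::metric_space set"
    and K :: nat
    and c :: "nat \<Rightarrow> 'a \<Rightarrow> 'b \<Rightarrow> real"
    and B :: "(nat \<Rightarrow> 'b) \<Rightarrow> 'a"
  assumes compX: "compact X"
    and compY: "\<And>k. k < K \<Longrightarrow> compact (Ys k)"
    and cont: "\<And>k. k < K \<Longrightarrow> continuous_on (X \<times> Ys k) (\<lambda>(x, y). c k x y)"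
    and B_in: "\<And>Y. Y \<in> PiE {..<K} Ys \<Longrightarrow> B Y \<in> X"
    and B_unique_min: "\<And>Y x. Y \<in> PiE {..<K} Ys \<Longrightarrow> x \<in> X \<Longrightarrow> x \<noteq> B Y \<Longrightarrow>
                 (\<Sum>k<K. c k (B Y) (Y k)) < (\<Sum>k<K. c k x (Y k))"
    and tpos: "t > 0"
  shows "\<exists>e>0. \<forall>x\<in>X. \<forall>Y\<in>PiE {..<K} Ys. t \<le> dist x (B Y) \<longrightarrow>
            (\<Sum>k<K. c k (B Y) (Y k)) + e \<le> (\<Sum>k<K. c k x (Y k))"
proof (cases "X = {}")
  case True then show ?thesis by (intro exI[of _ 1]) auto
next
  case Xne: False
  define P where "P = PiE {..<K} Ys"
  define C where "C x Y = (\<Sum>k<K. c k x (Y k))" for x Y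
  have compP: "compact P" unfolding P_def by (rule compact_PiE_lessThan[OF compY])
  have contC': "continuous_on (X \<times> P) (\<lambda>p. C (fst p) (snd p))"
    unfolding P_def C_def by (rule contC[OF cont])
  define S where "S = X \<times> (X \<times> P)"
  have compS: "compact S" unfolding S_def using compX compP by (intro compact_Times)
  have gen: "continuous_on S (\<lambda>p. C (g p) (snd (snd p)))"
    if gc: "continuous_on S g" and gi: "g ` S \<subseteq> X" for g
  proof -
    have i1: "continuous_on S (\<lambda>p. (g p, snd (snd p)))"
      by (intro continuous_on_Pair gc continuous_on_snd continuous_on_id)
    have i2: "(\<lambda>p. (g p, snd (snd p))) ` S \<subseteq> X \<times> P" using gi unfolding S_def by auto
    from continuous_on_compose2[OF contC' i1 i2] show ?thesis by simp
  qed
  have cf1: "continuous_on S (\<lambda>p. C (fst p) (snd (snd p)))"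
    by (rule gen) (auto simp: S_def intro: continuous_on_fst continuous_on_id)
  have cf2: "continuous_on S (\<lambda>p. C (fst (snd p)) (snd (snd p)))"
    by (rule gen) (auto simp: S_def intro!: continuous_on_fst continuous_on_snd continuous_on_id)
  have cfz: "continuous_on S (\<lambda>p. C z (snd (snd p)))" if "z \<in> X" for z
    by (rule gen) (use that in \<open>auto simp: S_def\<close>)
  have cd: "continuous_on S (\<lambda>p. dist (fst p) (fst (snd p)))"
    by (intro continuous_on_dist continuous_on_fst continuous_on_snd continuous_on_id)
  define T where "T = {p\<in>S. t \<le> dist (fst p) (fst (snd p)) \<and>
      (\<forall>z\<in>X. C (fst (snd p)) (snd (snd p)) \<le> C z (snd (snd p)))}"
  have Teq: "T = (S \<inter> (\<lambda>p. dist (fst p) (fst (snd p))) -` {t..}) \<inter>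
      (\<Inter>z\<in>X. S \<inter> (\<lambda>p. C (fst (snd p)) (snd (snd p)) - C z (snd (snd p))) -` {..0})"
    unfolding T_def using Xne by auto
  have "closedin (top_of_set S) T"
    unfolding Teq
  proof (rule closedin_Int)
    show "closedin (top_of_set S) (S \<inter> (\<lambda>p. dist (fst p) (fst (snd p))) -` {t..})"
      by (rule continuous_closedin_preimage[OF cd]) simp
    show "closedin (top_of_set S) (\<Inter>z\<in>X. S \<inter> (\<lambda>p. C (fst (snd p)) (snd (snd p)) - C z (snd (snd p))) -` {..0})"
    proof (rule closedin_INT[OF Xne])
      fix z assume z: "z \<in> X"
      show "closedin (top_of_set S) (S \<inter> (\<lambda>p. C (fst (snd p)) (snd (snd p)) - C z (snd (snd p))) -` {..0})"
        by (rule continuous_closedin_preimage) (intro continuous_on_diff cf2 cfz z, simp)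
    qed
  qed
  then have compT: "compact T" using compS closedin_compact by blast
  define H where "H p = C (fst p) (snd (snd p)) - C (fst (snd p)) (snd (snd p))" for p
  have inT: "(x, B Y, Y) \<in> T" if "x \<in> X" "Y \<in> P" "t \<le> dist x (B Y)" for x Y
  proof -
    have "C (B Y) Y \<le> C z Y" if "z \<in> X" for z
      using B_unique_min[of Y z] \<open>Y \<in> P\<close> that unfolding P_def C_def
      by (cases "z = B Y") auto
    then show ?thesis using that B_in[of Y] unfolding T_def S_def P_def by auto
  qed
  show ?thesis
  proof (cases "T = {}")
    case True
    then show ?thesis using inT unfolding P_def by (intro exI[of _ 1]) fastforce
  next
    case False
    have "continuous_on T H" unfolding H_def
      by (rule continuous_on_subset[of S]) (intro continuous_on_diff cf1 cf2, auto simp: T_def)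
    from continuous_attains_inf[OF compT False this]
    obtain p0 where p0: "p0 \<in> T" and p0min: "\<And>q. q \<in> T \<Longrightarrow> H p0 \<le> H q" by blast
    obtain x0 b0 Y0 where p0eq: "p0 = (x0, b0, Y0)" by (cases p0) auto
    have x0: "x0 \<in> X" and b0: "b0 \<in> X" and Y0: "Y0 \<in> P" and d0: "t \<le> dist x0 b0"
      and m0: "\<And>z. z \<in> X \<Longrightarrow> C b0 Y0 \<le> C z Y0"
      using p0 unfolding p0eq T_def S_def by auto
    have "b0 = B Y0"
    proof (rule ccontr)
      assume "b0 \<noteq> B Y0"
      then have "C (B Y0) Y0 < C b0 Y0" using B_unique_min[of Y0 b0] Y0 b0 unfolding P_def C_def by auto
      moreover have "C b0 Y0 \<le> C (B Y0) Y0" using m0 B_in Y0 unfolding P_def by auto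
      ultimately show False by simp
    qed
    moreover have "x0 \<noteq> b0" using d0 tpos by auto
    ultimately have "C b0 Y0 < C x0 Y0" using B_unique_min[of Y0 x0] Y0 x0 unfolding P_def C_def by auto
    then have Hpos: "H p0 > 0" unfolding H_def p0eq by simp
    show ?thesis
    proof (intro exI[of _ "H p0"] conjI Hpos ballI impI)
      fix x Y assume "x \<in> X" "Y \<in> PiE {..<K} Ys" "t \<le> dist x (B Y)"
      then have "(x, B Y, Y) \<in> T" using inT unfolding P_def by auto
      from p0min[OF this] show "(\<Sum>k<K. c k (B Y) (Y k)) + H p0 \<le> (\<Sum>k<K. c k x (Y k))"
        unfolding H_def C_def by simp
    qed
  qed
qed

theorem lemma5:
  fixes X :: "'a::metric_space set"
    and Ys :: "nat \<Rightarrow> 'b::metric_space set"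
    and K :: nat
    and c :: "nat \<Rightarrow> 'a \<Rightarrow> 'b \<Rightarrow> real"
    and B :: "(nat \<Rightarrow> 'b) \<Rightarrow> 'a"
  assumes compX: "compact X"
    and compY: "\<And>k. k < K \<Longrightarrow> compact (Ys k)"
    and cont: "\<And>k. k < K \<Longrightarrow> continuous_on (X \<times> Ys k) (\<lambda>(x, y). c k x y)"
    and nonneg: "\<And>k x y. k < K \<Longrightarrow> x \<in> X \<Longrightarrow> y \<in> Ys k \<Longrightarrow> c k x y \<ge> 0"
    and B_in: "\<And>Y. Y \<in> PiE {..<K} Ys \<Longrightarrow> B Y \<in> X"
    and B_unique_min: "\<And>Y x. Y \<in> PiE {..<K} Ys \<Longrightarrow> x \<in> X \<Longrightarrow> x \<noteq> B Y \<Longrightarrow>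
                 (\<Sum>k<K. c k (B Y) (Y k)) < (\<Sum>k<K. c k x (Y k))"
    and nontriv: "\<exists>x\<in>X. \<exists>Y\<in>PiE {..<K} Ys. x \<noteq> B Y"
  shows "\<exists>\<eta> :: real \<Rightarrow> real.
           (let R = (SUP p\<in>X \<times> PiE {..<K} Ys. dist (fst p) (B (snd p))) in
              lsc_on {0..R} \<eta> \<and> mono_on {0..R} \<eta> \<and>
              (\<forall>s\<in>{0..R}. \<eta> s \<ge> 0 \<and> (\<eta> s = 0 \<longleftrightarrow> s = 0)) \<and>
              (\<forall>x\<in>X. \<forall>Y\<in>PiE {..<K} Ys.
                  (\<Sum>k<K. c k x (Y k)) \<ge> (\<Sum>k<K. c k (B Y) (Y k)) + \<eta> (dist x (B Y))))"
proof -
  define P where "P = PiE {..<K} Ys"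
  define C where "C x Y = (\<Sum>k<K. c k x (Y k))" for x Y
  have minle: "C (B Y) Y \<le> C x Y" if "x \<in> X" "Y \<in> P" for x Y
    using B_unique_min[of Y x] that unfolding P_def C_def by (cases "x = B Y") auto
  have key: "\<exists>e>0. \<forall>x\<in>X. \<forall>Y\<in>P. t \<le> dist x (B Y) \<longrightarrow> C (B Y) Y + e \<le> C x Y"
    if "t > 0" for t
    using key_gap[OF compX compY cont B_in B_unique_min that] unfolding P_def C_def by blast
  define Q where "Q s = {e. \<exists>t. 0 < t \<and> t < s \<and> 0 \<le> e \<and> e \<le> 1 \<and>
      (\<forall>x\<in>X. \<forall>Y\<in>P. t \<le> dist x (B Y) \<longrightarrow> C (B Y) Y + e \<le> C x Y)}" for s
  define \<eta> where "\<eta> s = (if s \<le> 0 then 0 else Sup (Q s))" for s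
  have Qbdd: "bdd_above (Q s)" for s unfolding Q_def by (intro bdd_aboveI[of _ 1]) auto
  have Q0: "0 \<in> Q s" if "s > 0" for s
    unfolding Q_def using that minle by (intro CollectI exI[of _ "s/2"]) auto
  have Qne: "Q s \<noteq> {}" if "s > 0" for s using Q0[OF that] by auto
  have eta_nonneg: "\<eta> s \<ge> 0" for s
    unfolding \<eta>_def using Q0 Qbdd by (auto intro: cSup_upper)
  have eta_pos: "\<eta> s > 0" if "s > 0" for s
  proof -
    from key[of "s/2"] that obtain e where e: "e > 0"
      and he: "\<forall>x\<in>X. \<forall>Y\<in>P. s/2 \<le> dist x (B Y) \<longrightarrow> C (B Y) Y + e \<le> C x Y" by auto
    have "min e 1 \<in> Q s" unfolding Q_def
    proof (intro CollectI exI[of _ "s/2"] conjI)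
      show "\<forall>x\<in>X. \<forall>Y\<in>P. s/2 \<le> dist x (B Y) \<longrightarrow> C (B Y) Y + min e 1 \<le> C x Y"
        using he by (smt (verit))
    qed (use that e in auto)
    then have "min e 1 \<le> Sup (Q s)" using Qbdd by (rule cSup_upper)
    then show ?thesis using that e unfolding \<eta>_def by simp
  qed
  have Qmono: "Q r \<subseteq> Q s" if "r \<le> s" for r s
    unfolding Q_def using that by force
  have mono\<eta>: "mono \<eta>"
  proof (rule monoI)
    fix r s :: real assume rs: "r \<le> s"
    show "\<eta> r \<le> \<eta> s"
    proof (cases "r \<le> 0")
      case True then show ?thesis using eta_nonneg[of s] unfolding \<eta>_def by simp
    next
      case False
      then have "Sup (Q r) \<le> Sup (Q s)" using Qne[of r] Qbdd Qmono[OF rs] by (intro cSup_subset_mono) auto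
      then show ?thesis using False rs unfolding \<eta>_def by simp
    qed
  qed
  have lsc: "lsc_on A \<eta>" for A
    unfolding lsc_on_def
  proof (intro ballI allI impI)
    fix s t assume "s \<in> A" and ts: "t < \<eta> s"
    show "\<exists>e>0. \<forall>y\<in>A. dist y s < e \<longrightarrow> t < \<eta> y"
    proof (cases "s \<le> 0")
      case True
      then have "t < 0" using ts unfolding \<eta>_def by simp
      then show ?thesis using eta_nonneg by (intro exI[of _ 1]) (auto intro: less_le_trans)
    next
      case False
      then have "t < Sup (Q s)" using ts unfolding \<eta>_def by simp
      then obtain e0 where e0: "e0 \<in> Q s" "t < e0" using less_cSup_iff[OF Qne Qbdd] False by force
      then obtain t0 where t0: "0 < t0" "t0 < s" "0 \<le> e0" "e0 \<le> 1"
        "\<forall>x\<in>X. \<forall>Y\<in>P. t0 \<le> dist x (B Y) \<longrightarrow> C (B Y) Y + e0 \<le> C x Y"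
        unfolding Q_def by blast
      show ?thesis
      proof (intro exI[of _ "s - t0"] conjI ballI impI)
        show "s - t0 > 0" using t0 by simp
        fix y assume "y \<in> A" "dist y s < s - t0"
        then have y: "y > t0" by (simp add: dist_real_def abs_less_iff)
        then have "e0 \<in> Q y" unfolding Q_def using t0 by blast
        then have "e0 \<le> Sup (Q y)" using Qbdd by (rule cSup_upper)
        then show "t < \<eta> y" using y t0 e0 unfolding \<eta>_def by simp
      qed
    qed
  qed
  have ineq: "C (B Y) Y + \<eta> (dist x (B Y)) \<le> C x Y" if x: "x \<in> X" and Y: "Y \<in> P" for x Y
  proof (cases "dist x (B Y) \<le> 0")
    case True then show ?thesis using minle[OF x Y] unfolding \<eta>_def by simp
  next
    case False
    have "Sup (Q (dist x (B Y))) \<le> C x Y - C (B Y) Y"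
    proof (rule cSup_least)
      show "Q (dist x (B Y)) \<noteq> {}" using False Qne by simp
      fix e assume "e \<in> Q (dist x (B Y))"
      then obtain t where "t < dist x (B Y)"
        "\<forall>x\<in>X. \<forall>Y\<in>P. t \<le> dist x (B Y) \<longrightarrow> C (B Y) Y + e \<le> C x Y"
        unfolding Q_def by blast
      then show "e \<le> C x Y - C (B Y) Y" using x Y by force
    qed
    then show ?thesis using False unfolding \<eta>_def by simp
  qed
  have A: "\<eta> s \<ge> 0 \<and> (\<eta> s = 0 \<longleftrightarrow> s = 0)" if "s \<ge> 0" for s
    using that eta_nonneg[of s] eta_pos[of s] unfolding \<eta>_def by auto
  have B: "(\<Sum>k<K. c k x (Y k)) \<ge> (\<Sum>k<K. c k (B Y) (Y k)) + \<eta> (dist x (B Y))"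
    if "x \<in> X" "Y \<in> PiE {..<K} Ys" for x Y
    using ineq[of x Y] that unfolding P_def C_def by simp
  have all: "lsc_on {0..R} \<eta> \<and> mono_on {0..R} \<eta> \<and>
              (\<forall>s\<in>{0..R}. \<eta> s \<ge> 0 \<and> (\<eta> s = 0 \<longleftrightarrow> s = 0)) \<and>
              (\<forall>x\<in>X. \<forall>Y\<in>PiE {..<K} Ys.
                  (\<Sum>k<K. c k x (Y k)) \<ge> (\<Sum>k<K. c k (B Y) (Y k)) + \<eta> (dist x (B Y)))" for R
    using lsc[of "{0..R}"] mono_imp_mono_on[OF mono\<eta>, of "{0..R}"] A B by simp
  show ?thesis unfolding Let_def using all by blast
qed

end
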